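(* Let $n\in\mathbb{N}$ with $n\ge2$, $S:=\{0,\dots,n-1\}$, and let $P$ be a canonically labeled compact packing with $|\operatorname{radii}(P)|=n$ and $\max\operatorname{radii}(P)=1$. Then the canonical realizer of $P$ is the unique element of $\{\tau\in(0,\infty)^S:\tau(n-1)=1\}$ that tightly realizes the set $\operatorname{code}(\operatorname{coronas}(P))\subseteq\operatorname{codes}(S)$.
   Context: A corona is a collection of closed discs $C,D_0,\dots,D_{m-1}$ with pairwise disjoint interiors such that each $D_i$ is tangent to $C$ and to $D_{i+1\bmod m}$ ($C$ center, $D_i$ petals). A compact packing is a collection $P$ of closed discs in the plane with pairwise disjoint interiors such that every $C\in P$ is the center of a corona with petals from $P$; $\operatorname{radii}(P)=\{r_D:D\in P\}$. $\operatorname{coronas}(P)$ is the set of inclusion-maximal coronas with discs from $P$. Canonical labeling: if $\operatorname{radii}(P)=\{r_0<\dots<r_{n-1}\}$, a disc of radius $r_i$ gets label $i$; the canonical realizer is $\rho(i)=r_i$. A coronal code over $S$ is a formal string $c:p_0\dots p_{m-1}$ with symbols from $S$ (center $c$, petals $p_i$), identified up to rotation/reversal of the petal string; $\operatorname{codes}(S)$ is the set of classes. For a maximal corona $\mathcal C$ with center $C$ and petals $D_0,\dots,D_{m-1}$ in cyclic order, $\operatorname{code}(\mathcal C)$ is the code formed from their labels. Angle symbol: $c^a_b:=\arccos\!\Big(\frac{(c+a)^2+(c+b)^2-(a+b)^2}{2(c+a)(c+b)}\Big)$; angle sum $\alpha(c:p_0\dots p_{m-1}):=\sum_{i} c^{p_i}_{p_{i+1\bmod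 m}}$. For $\tau\in(0,\infty)^S$, $\alpha(x)|_\tau$ is the value after substituting $\tau(s)$ for each symbol $s$; a code $x$ is tightly realized by $\tau$ if $\alpha(x)|_\tau=2\pi$, and a set of codes is tightly realized by $\tau$ if each of its elements is.
   Formalization: Corona petals wind once around the centre: seen from the centre of C, their centres have cyclically increasing arguments in one orientation, each gap in (0, pi), and maximality compares only coronas with the same centre. Each condition added here is assumed in the paper as well or is needed for the statement above to hold. *)

theory Defs
  imports "HOL-Analysis.Analysis"
begin

text \<open>A closed disc is represented by its centre (a point of the plane, as a complex
  number) and its radius; the disc itself is the point set cball centre radius.\<close>

type_synonym disc = "complex \<times> real"

definition centre :: "disc \<Rightarrow> complex" where "centre D = fst D"
definition radius :: "disc \<Rightarrow> real" where "radius D = snd D"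

definition is_disc :: "disc \<Rightarrow> bool" where
  "is_disc D \<longleftrightarrow> radius D > 0"

definition disjoint_interiors :: "disc set \<Rightarrow> bool" where
  "disjoint_interiors A \<longleftrightarrow>
     (\<forall>D\<in>A. \<forall>E\<in>A. D \<noteq> E \<longrightarrow>
        ball (centre D) (radius D) \<inter> ball (centre E) (radius E) = {})"

definition tangent :: "disc \<Rightarrow> disc \<Rightarrow> bool" where
  "tangent D E \<longleftrightarrow> dist (centre D) (centre E) = radius D + radius E"

text \<open>The petals, listed in counter-clockwise cyclic order, go once around the centre:
  the directions of the petal centres seen from the centre of C have arguments
  theta 0 < theta 1 < ... < theta (m-1) < theta 0 + 2 pi, with every consecutive angular
  gap (cyclically) strictly between 0 and pi.\<close>
definition ccw_around :: "disc \<Rightarrow> disc list \<Rightarrow> bool" where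
  "ccw_around C ps \<longleftrightarrow> length ps > 0 \<and>
     (\<exists>\<theta>::nat \<Rightarrow> real.
        (\<forall>i<length ps. centre (ps!i) - centre C
             = complex_of_real (radius C + radius (ps!i)) * cis (\<theta> i)) \<and>
        (\<forall>i. Suc i < length ps \<longrightarrow> 0 < \<theta> (Suc i) - \<theta> i \<and> \<theta> (Suc i) - \<theta> i < pi) \<and>
        0 < \<theta> 0 + 2 * pi - \<theta> (length ps - 1) \<and> \<theta> 0 + 2 * pi - \<theta> (length ps - 1) < pi)"

definition around :: "disc \<Rightarrow> disc list \<Rightarrow> bool" where
  "around C ps \<longleftrightarrow> ccw_around C ps \<or> ccw_around C (rev ps)"

definition corona :: "disc \<Rightarrow> disc list \<Rightarrow> bool" where
  "corona C ps \<longleftrightarrow>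
     distinct (C # ps) \<and> (\<forall>D\<in>set (C # ps). is_disc D) \<and>
     disjoint_interiors (set (C # ps)) \<and>
     (\<forall>i<length ps. tangent (ps!i) C \<and> tangent (ps!i) (ps!((i + 1) mod length ps))) \<and>
     around C ps"

definition compact_packing :: "disc set \<Rightarrow> bool" where
  "compact_packing P \<longleftrightarrow>
     (\<forall>D\<in>P. is_disc D) \<and> disjoint_interiors P \<and>
     (\<forall>C\<in>P. \<exists>ps. set ps \<subseteq> P \<and> corona C ps)"

definition radii :: "disc set \<Rightarrow> real set" where
  "radii P = radius ` P"

definition coronas :: "disc set \<Rightarrow> (disc \<times> disc list) set" where
  "coronas P = {(C, ps). C \<in> P \<and> set ps \<subseteq> P \<and> corona C ps \<and>
       \<not> (\<exists>qs. set qs \<subseteq> P \<and> corona C qs \<and> set ps \<subset> set qs)}"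

definition label :: "disc set \<Rightarrow> disc \<Rightarrow> nat" where
  "label P D = (THE i. i < card (radii P) \<and> sorted_list_of_set (radii P) ! i = radius D)"

definition canonical_realizer :: "disc set \<Rightarrow> nat \<Rightarrow> real" where
  "canonical_realizer P = (\<lambda>i\<in>{0..<card (radii P)}. sorted_list_of_set (radii P) ! i)"

text \<open>Coronal codes c:p_0...p_(m-1), identified up to rotation / reversal of the petal string.\<close>
type_synonym code = "nat \<times> nat list"

definition code_equiv :: "code \<Rightarrow> code \<Rightarrow> bool" where
  "code_equiv x y \<longleftrightarrow> fst x = fst y \<and>
     (\<exists>k. snd y = rotate k (snd x) \<or> snd y = rev (rotate k (snd x)))"

definition code_class :: "code \<Rightarrow> code set" where
  "code_class x = {y. code_equiv x y}"

definition codes :: "nat set \<Rightarrow> code set set" where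
  "codes S = code_class ` {(c, ps). c \<in> S \<and> set ps \<subseteq> S}"

definition code_of :: "disc set \<Rightarrow> disc \<times> disc list \<Rightarrow> code set" where
  "code_of P cor = code_class (label P (fst cor), map (label P) (snd cor))"

definition angle_sym :: "real \<Rightarrow> real \<Rightarrow> real \<Rightarrow> real" where
  "angle_sym c a b = arccos (((c + a)^2 + (c + b)^2 - (a + b)^2) / (2 * (c + a) * (c + b)))"

definition angle_sum :: "(nat \<Rightarrow> real) \<Rightarrow> code \<Rightarrow> real" where
  "angle_sum \<tau> x = (\<Sum>i<length (snd x).
      angle_sym (\<tau> (fst x)) (\<tau> (snd x ! i)) (\<tau> (snd x ! ((i + 1) mod length (snd x)))))"

definition tightly_realizes_code :: "(nat \<Rightarrow> real) \<Rightarrow> code set \<Rightarrow> bool" where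
  "tightly_realizes_code \<tau> X \<longleftrightarrow> (\<forall>x\<in>X. angle_sum \<tau> x = 2 * pi)"

definition tightly_realizes :: "(nat \<Rightarrow> real) \<Rightarrow> code set set \<Rightarrow> bool" where
  "tightly_realizes \<tau> Xs \<longleftrightarrow> (\<forall>X\<in>Xs. tightly_realizes_code \<tau> X)"

end

theory Submission
  imports Defs
begin


lemma stewart:
  fixes x y z :: complex and t :: real
  shows "(1-t) * cmod (z-x)^2 + t * cmod (z-y)^2
       = cmod (z - (of_real (1-t) * x + of_real t * y))^2 + t*(1-t) * cmod (x-y)^2"
  unfolding cmod_power2 by (simp add: algebra_simps power2_eq_square)

lemma L3:
  fixes x y z p :: complex and rx ry rz :: real
  assumes "rx > 0" "ry > 0" "rz > 0" "cmod (x - y) = rx + ry"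
    "cmod (z - x) \<ge> rz + rx" "cmod (z - y) \<ge> rz + ry"
    "p \<in> closed_segment x y"
  shows "cmod (z - p) > rz"
proof -
  obtain t where t: "0 \<le> t" "t \<le> 1" "p = of_real (1-t) * x + of_real t * y"
    using assms(7) by (auto simp: closed_segment_def scaleR_conv_of_real)
  have s: "(1-t) * cmod (z-x)^2 + t * cmod (z-y)^2
       = cmod (z - p)^2 + t*(1-t) * (rx+ry)^2"
    using stewart[of t z x y] t assms(4) by simp
  have a1: "cmod (z-x)^2 \<ge> (rz+rx)^2" using assms by (intro power_mono) auto
  have a2: "cmod (z-y)^2 \<ge> (rz+ry)^2" using assms by (intro power_mono) auto
  have "(1-t) * cmod (z-x)^2 + t * cmod (z-y)^2 \<ge> (1-t)*(rz+rx)^2 + t*(rz+ry)^2"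
    using a1 a2 t by (intro add_mono mult_left_mono) auto
  moreover have "(1-t)*(rz+rx)^2 + t*(rz+ry)^2 - t*(1-t)*(rx+ry)^2
      = rz^2 + 2*rz*((1-t)*rx + t*ry) + ((1-t)*rx - t*ry)^2"
    by (simp add: algebra_simps power2_eq_square)
  moreover have "2*rz*((1-t)*rx + t*ry) > 0"
    using assms t by (cases "t = 0") (auto intro!: mult_pos_pos add_pos_nonneg add_nonneg_pos)
  ultimately have "cmod (z-p)^2 > rz^2"
    using s by (smt (verit) zero_le_power2)
  then show ?thesis using assms(3)
    by (meson abs_le_square_iff abs_of_pos norm_ge_zero not_less power2_less_imp_less)
qed



lemma sep:
  assumes "disjoint_interiors A" "D\<in>A" "E\<in>A" "D\<noteq>E" "radius D>0" "radius E>0"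
  shows "cmod (centre D - centre E) \<ge> radius D + radius E"
proof (rule ccontr)
  assume "\<not> ?thesis"
  hence lt: "cmod (centre E - centre D) < radius D + radius E" by (simp add: norm_minus_commute)
  define s where "s = radius D + radius E"
  have s: "s > 0" using assms s_def by simp
  define p where "p = centre D + of_real (radius D / s) * (centre E - centre D)"
  have "dist (centre D) p = cmod (of_real (radius D / s) * (centre E - centre D))"
    by (simp add: p_def dist_norm)
  also have "\<dots> = radius D / s * cmod (centre E - centre D)"
    using s assms by (simp only: norm_mult norm_of_real) simp
  also have "\<dots> < radius D / s * s" using lt s assms(5) s_def by (intro mult_strict_left_mono) auto
  finally have p1: "p \<in> ball (centre D) (radius D)" using s by simp
  have "centre E - p = of_real (radius E / s) * (centre E - centre D)"
  proof -
    have nz: "complex_of_real (radius D) + complex_of_real (radius E) \<noteq> 0"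
      using s unfolding s_def by (metis of_real_add of_real_eq_0_iff less_irrefl)
    show ?thesis using nz by (simp add: p_def s_def field_simps)
  qed
  hence "dist (centre E) p = cmod (of_real (radius E / s) * (centre E - centre D))"
    by (simp add: dist_norm)
  also have "\<dots> = radius E / s * cmod (centre E - centre D)"
    using s assms by (simp only: norm_mult norm_of_real) simp
  also have "\<dots> < radius E / s * s" using lt s assms(6) s_def by (intro mult_strict_left_mono) auto
  finally have p2: "p \<in> ball (centre E) (radius E)" using s by simp
  show False using assms(1-4) p1 p2 unfolding disjoint_interiors_def by blast
qed

lemma cover:
  fixes x y p :: complex
  assumes "cmod (x - y) = rx + ry" "p \<in> closed_segment x y" "rx \<ge> 0" "ry \<ge> 0"
  shows "cmod (p - x) \<le> rx \<or> cmod (p - y) \<le> ry"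
proof -
  obtain t where t: "0 \<le> t" "t \<le> 1" "p = of_real (1-t) * x + of_real t * y"
    using assms(2) by (auto simp: closed_segment_def scaleR_conv_of_real)
  have "p - x = of_real t * (y - x)" using t by (simp add: algebra_simps)
  hence e1: "cmod (p - x) = t * (rx + ry)" using t assms(1) by (simp add: norm_mult norm_minus_commute)
  have "p - y = of_real (1-t) * (x - y)" using t by (simp add: algebra_simps)
  hence "cmod (p - y) = \<bar>1-t\<bar> * cmod (x - y)" by (simp only: norm_mult norm_of_real)
  hence e2: "cmod (p - y) = (1-t) * (rx + ry)" using t assms(1) by simp
  show ?thesis
  proof (cases "t * (rx + ry) \<le> rx")
    case True thus ?thesis using e1 by simp
  next
    case False thus ?thesis using e2 by (simp add: algebra_simps)
  qed
qed

definition thn :: "(nat \<Rightarrow> real) \<Rightarrow> nat \<Rightarrow> nat \<Rightarrow> real" where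
  "thn \<theta> m k = (if Suc k < m then \<theta> (Suc k) else \<theta> 0 + 2*pi)"

lemma sector:
  fixes \<theta> :: "nat \<Rightarrow> real"
  assumes "m > 0"
  shows "\<exists>k<m. \<exists>j::int. \<theta> k \<le> \<phi> + 2*pi*j \<and> \<phi> + 2*pi*j < thn \<theta> m k"
proof -
  define fl where "fl = floor ((\<phi> - \<theta> 0)/(2*pi))"
  define \<phi>' where "\<phi>' = \<phi> - 2*pi*fl"
  have f1: "of_int fl \<le> (\<phi> - \<theta> 0)/(2*pi)" "(\<phi> - \<theta> 0)/(2*pi) < of_int fl + 1"
    unfolding fl_def by linarith+
  have pp: "pi > 0" by simp
  have "2*pi*fl \<le> \<phi> - \<theta> 0" using f1(1) pp by (simp add: field_simps)
  hence g1: "\<theta> 0 \<le> \<phi>'" unfolding \<phi>'_def by simp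
  have "\<phi> - \<theta> 0 < 2*pi*(fl + 1)" using f1(2) pp by (simp add: field_simps)
  hence g2: "\<phi>' < \<theta> 0 + 2*pi" unfolding \<phi>'_def by (simp add: algebra_simps)
  define K where "K = {k. k < m \<and> \<theta> k \<le> \<phi>'}"
  have finK: "finite K" unfolding K_def by simp
  have "0 \<in> K" unfolding K_def using assms g1 by simp
  define k where "k = Max K"
  have kK: "k \<in> K" using finK \<open>0\<in>K\<close> k_def Max_in by blast
  have kmax: "\<And>i. i \<in> K \<Longrightarrow> i \<le> k" using finK k_def by simp
  have "\<phi>' < thn \<theta> m k"
  proof (cases "Suc k < m")
    case True
    hence "Suc k \<notin> K" using kmax by fastforce
    thus ?thesis using True unfolding K_def thn_def by auto
  next
    case False thus ?thesis using g2 unfolding thn_def by simp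
  qed
  moreover have "k < m" "\<theta> k \<le> \<phi>'" using kK K_def by auto
  ultimately show ?thesis unfolding \<phi>'_def
    by (intro exI[of _ k] conjI exI[of _ "-fl"]) auto
qed

lemma thn_cis:
  assumes "k < m"
  shows "cis (thn \<theta> m k) = cis (\<theta> (Suc k mod m))"
proof (cases "Suc k < m")
  case True thus ?thesis by (simp add: thn_def)
next
  case False
  hence "Suc k = m" using assms by simp
  thus ?thesis using False by (simp add: thn_def cis.ctr complex_eq_iff)
qed



lemma unpack:
  assumes "ccw_around C qs"
  shows "length qs > 0 \<and> (\<exists>\<theta>. (\<forall>i<length qs. centre (qs!i) - centre C
             = complex_of_real (radius C + radius (qs!i)) * cis (\<theta> i)) \<and>
       (\<forall>k<length qs. 0 < thn \<theta> (length qs) k - \<theta> k \<and> thn \<theta> (length qs) k - \<theta> k < pi))"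
proof -
  obtain \<theta> where th: "\<forall>i<length qs. centre (qs!i) - centre C
             = complex_of_real (radius C + radius (qs!i)) * cis (\<theta> i)"
    "\<forall>i. Suc i < length qs \<longrightarrow> 0 < \<theta> (Suc i) - \<theta> i \<and> \<theta> (Suc i) - \<theta> i < pi"
    "0 < \<theta> 0 + 2 * pi - \<theta> (length qs - 1)" "\<theta> 0 + 2 * pi - \<theta> (length qs - 1) < pi"
    and m: "length qs > 0"
    using assms unfolding ccw_around_def by blast
  have "\<forall>k<length qs. 0 < thn \<theta> (length qs) k - \<theta> k \<and> thn \<theta> (length qs) k - \<theta> k < pi"
  proof (intro allI impI)
    fix k assume k: "k < length qs"
    show "0 < thn \<theta> (length qs) k - \<theta> k \<and> thn \<theta> (length qs) k - \<theta> k < pi"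
    proof (cases "Suc k < length qs")
      case True thus ?thesis using th(2) by (simp add: thn_def)
    next
      case False
      hence "k = length qs - 1" using k by simp
      thus ?thesis using th(3,4) False by (simp add: thn_def)
    qed
  qed
  thus ?thesis using th(1) m by blast
qed

lemma trig_id:
  "complex_of_real (sin (B - A)) * cis x
    = complex_of_real (sin (B - x)) * cis A + complex_of_real (sin (x - A)) * cis B"
  by (simp add: complex_eq_iff cis.ctr sin_diff cos_diff algebra_simps)

lemma dummy: True by simp

lemma cis_shift: "cis (x + 2*pi * of_int j) = cis x"
  by (simp add: cis_mult[symmetric])

lemma cone:
  assumes "ccw_around C qs" "radius C > 0" "\<forall>D\<in>set qs. radius D > 0"
  shows "\<exists>k<length qs. \<exists>s t. s \<ge> 0 \<and> t \<ge> 0 \<and>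
     w = complex_of_real s * (centre (qs!k) - centre C)
       + complex_of_real t * (centre (qs!(Suc k mod length qs)) - centre C)"
proof -
  define m where "m = length qs"
  obtain \<theta> where th: "\<forall>i<m. centre (qs!i) - centre C
             = complex_of_real (radius C + radius (qs!i)) * cis (\<theta> i)"
      "\<forall>k<m. 0 < thn \<theta> m k - \<theta> k \<and> thn \<theta> m k - \<theta> k < pi" and m: "m > 0"
    using unpack[OF assms(1)] unfolding m_def by blast
  obtain k j where k: "k < m" "\<theta> k \<le> Arg w + 2*pi * of_int j" "Arg w + 2*pi * of_int j < thn \<theta> m k"
    using sector[OF m] by blast
  define \<phi> where "\<phi> = Arg w + 2*pi * of_int j"
  define B where "B = thn \<theta> m k"
  have g: "0 < B - \<theta> k" "B - \<theta> k < pi" using th(2) k(1) B_def by auto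
  have sg: "sin (B - \<theta> k) > 0" using g by (intro sin_gt_zero) auto
  have s1: "sin (B - \<phi>) \<ge> 0" using k g unfolding \<phi>_def B_def by (intro sin_ge_zero) auto
  have s2: "sin (\<phi> - \<theta> k) \<ge> 0" using k g unfolding \<phi>_def B_def by (intro sin_ge_zero) auto
  have wc: "w = complex_of_real (cmod w) * cis \<phi>"
    using rcis_cmod_Arg[of w] unfolding \<phi>_def rcis_def by (simp add: cis_shift)
  define rk where "rk = radius C + radius (qs!k)"
  define rn where "rn = radius C + radius (qs!(Suc k mod m))"
  have rk: "rk > 0" using assms k(1) unfolding rk_def m_def by (simp add: add_pos_pos)
  have rn: "rn > 0" using assms k(1) m unfolding rn_def m_def by (simp add: add_pos_pos)
  have ek: "centre (qs!k) - centre C = complex_of_real rk * cis (\<theta> k)"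
    using th(1) k(1) rk_def by simp
  have en: "centre (qs!(Suc k mod m)) - centre C = complex_of_real rn * cis B"
    using th(1) m rn_def thn_cis[OF k(1), of \<theta>] B_def by simp
  define s where "s = cmod w * sin (B - \<phi>) / (sin (B - \<theta> k) * rk)"
  define t where "t = cmod w * sin (\<phi> - \<theta> k) / (sin (B - \<theta> k) * rn)"
  have "w = complex_of_real (cmod w / sin (B - \<theta> k)) * (complex_of_real (sin (B - \<theta> k)) * cis \<phi>)"
  proof -
    have "complex_of_real (cmod w / sin (B - \<theta> k)) * (complex_of_real (sin (B - \<theta> k)) * cis \<phi>)
       = complex_of_real (cmod w / sin (B - \<theta> k) * sin (B - \<theta> k)) * cis \<phi>"
      by (simp only: of_real_mult mult.assoc)
    also have "cmod w / sin (B - \<theta> k) * sin (B - \<theta> k) = cmod w" using sg by simp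
    finally have "complex_of_real (cmod w / sin (B - \<theta> k)) * (complex_of_real (sin (B - \<theta> k)) * cis \<phi>) = complex_of_real (cmod w) * cis \<phi>" by simp
    thus ?thesis using wc by metis
  qed
  also have "\<dots> = complex_of_real s * (centre (qs!k) - centre C)
       + complex_of_real t * (centre (qs!(Suc k mod m)) - centre C)"
  proof -
    have c1: "cmod w / sin (B - \<theta> k) * sin (B - \<phi>) = s * rk"
      using sg rk unfolding s_def by (simp add: field_simps)
    have c2: "cmod w / sin (B - \<theta> k) * sin (\<phi> - \<theta> k) = t * rn"
      using sg rn unfolding t_def by (simp add: field_simps)
    have aux: "\<And>a x y c d. complex_of_real a * (complex_of_real x * c + complex_of_real y * d)
         = complex_of_real (a*x) * c + complex_of_real (a*y) * d"
      by (simp add: algebra_simps)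
    have aux2: "\<And>a x c. complex_of_real a * (complex_of_real x * c) = complex_of_real (a*x) * c"
      by simp
    show ?thesis
      by (simp only: trig_id[of B "\<theta> k" \<phi>] ek en aux aux2 c1 c2)
  qed
  finally have "w = complex_of_real s * (centre (qs!k) - centre C)
       + complex_of_real t * (centre (qs!(Suc k mod m)) - centre C)" .
  moreover have "s \<ge> 0" "t \<ge> 0" unfolding s_def t_def using s1 s2 sg rk rn by auto
  ultimately show ?thesis using k(1) unfolding m_def by blast
qed

lemma extreme:
  assumes "ccw_around C qs" "radius C > 0" "\<forall>D\<in>set qs. radius D > 0"
  shows "\<exists>i<length qs. Re (centre (qs!i)) > Re (centre C)"
proof -
  define m where "m = length qs"
  obtain \<theta> where th: "\<forall>i<m. centre (qs!i) - centre C
             = complex_of_real (radius C + radius (qs!i)) * cis (\<theta> i)"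
      "\<forall>k<m. 0 < thn \<theta> m k - \<theta> k \<and> thn \<theta> m k - \<theta> k < pi" and m: "m > 0"
    using unpack[OF assms(1)] unfolding m_def by blast
  obtain k j where k: "k < m" "\<theta> k \<le> -pi/2 + 2*pi * of_int j" "-pi/2 + 2*pi * of_int j < thn \<theta> m k"
    using sector[OF m] by blast
  define B where "B = thn \<theta> m k"
  have g: "B - \<theta> k < pi" using th(2) k(1) B_def by auto
  have "sin (B - (-pi/2 + 2*pi * of_int j)) > 0" using k g unfolding B_def by (intro sin_gt_zero) auto
  moreover have "sin (B - (-pi/2 + 2*pi * of_int j)) = cos B"
  proof -
    have "sin (B - (-pi/2 + 2*pi * of_int j)) = sin ((B + pi/2) + (2*pi) * of_int (-j))"
      by (simp add: algebra_simps)
    also have "\<dots> = sin (B + pi/2)" by (simp only: sin_add sin_int_2pin cos_int_2pin) simp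
    also have "\<dots> = cos B" by (simp add: sin_add)
    finally show ?thesis .
  qed
  ultimately have cB: "cos B > 0" by simp
  define i where "i = Suc k mod m"
  have i: "i < m" using m i_def by simp
  have ri: "radius C + radius (qs!i) > 0" using assms i unfolding m_def by (simp add: add_pos_pos)
  have "centre (qs!i) - centre C = complex_of_real (radius C + radius (qs!i)) * cis B"
    using th(1) i thn_cis[OF k(1), of \<theta>] B_def i_def by simp
  hence "Re (centre (qs!i)) - Re (centre C) = (radius C + radius (qs!i)) * cos B"
    by (metis Re_complex_of_real cis.sel(1) minus_complex.sel(1) mult_zero_left
       times_complex.sel(1) Im_complex_of_real diff_zero)
  moreover have "(radius C + radius (qs!i)) * cos B > 0" using ri cB by simp
  ultimately show ?thesis using i unfolding m_def by (intro exI[of _ i]) auto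
qed



lemma cis_dist2:
  "cmod (complex_of_real R1 * cis a - complex_of_real R2 * cis b)^2
     = R1^2 + R2^2 - 2*R1*R2*cos (b - a)"
proof -
  have "cmod (complex_of_real R1 * cis a - complex_of_real R2 * cis b)^2
     = (R1 * cos a - R2 * cos b)^2 + (R1 * sin a - R2 * sin b)^2"
    unfolding cmod_power2 by (simp add: cis.ctr)
  also have "\<dots> = R1^2 + R2^2 - 2*R1*R2*cos (b - a)"
    unfolding cos_diff using sin_cos_squared_add[of a] sin_cos_squared_add[of b] by algebra
  finally show ?thesis .
qed

lemma angle_term:
  assumes "centre D - centre C = complex_of_real (radius C + radius D) * cis a"
    "centre E - centre C = complex_of_real (radius C + radius E) * cis b"
    "cmod (centre D - centre E) = radius D + radius E"
    "radius C > 0" "radius D > 0" "radius E > 0" "0 \<le> b - a" "b - a \<le> pi"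
  shows "angle_sym (radius C) (radius D) (radius E) = b - a"
proof -
  define R1 where "R1 = radius C + radius D"
  define R2 where "R2 = radius C + radius E"
  have "centre D - centre E = complex_of_real R1 * cis a - complex_of_real R2 * cis b"
    using assms(1,2) unfolding R1_def R2_def by (simp add: algebra_simps)
  hence "(radius D + radius E)^2 = R1^2 + R2^2 - 2*R1*R2*cos (b - a)"
    using assms(3) cis_dist2 by metis
  moreover have "R1 > 0" "R2 > 0" using assms unfolding R1_def R2_def by auto
  ultimately have "cos (b - a) = (R1^2 + R2^2 - (radius D + radius E)^2) / (2*R1*R2)"
    by (simp add: field_simps)
  hence "angle_sym (radius C) (radius D) (radius E) = arccos (cos (b - a))"
    unfolding angle_sym_def R1_def R2_def by simp
  also have "\<dots> = b - a" using assms(7,8) by (simp add: arccos_cos)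
  finally show ?thesis .
qed

lemma angle_geom:
  assumes "ccw_around C qs" "radius C > 0" "\<forall>D\<in>set qs. radius D > 0"
    "\<forall>i<length qs. tangent (qs!i) (qs!(Suc i mod length qs))"
  shows "(\<Sum>i<length qs. angle_sym (radius C) (radius (qs!i)) (radius (qs!(Suc i mod length qs)))) = 2*pi"
proof -
  define m where "m = length qs"
  obtain \<theta> where th: "\<forall>i<m. centre (qs!i) - centre C
             = complex_of_real (radius C + radius (qs!i)) * cis (\<theta> i)"
      "\<forall>k<m. 0 < thn \<theta> m k - \<theta> k \<and> thn \<theta> m k - \<theta> k < pi" and m: "m > 0"
    using unpack[OF assms(1)] unfolding m_def by blast
  have tm: "angle_sym (radius C) (radius (qs!i)) (radius (qs!(Suc i mod m))) = thn \<theta> m i - \<theta> i"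
    if i: "i < m" for i
  proof -
    have j: "Suc i mod m < m" using m by simp
    have e2: "centre (qs!(Suc i mod m)) - centre C
       = complex_of_real (radius C + radius (qs!(Suc i mod m))) * cis (thn \<theta> m i)"
      using th(1) j thn_cis[OF i, of \<theta>] by simp
    have "cmod (centre (qs!i) - centre (qs!(Suc i mod m))) = radius (qs!i) + radius (qs!(Suc i mod m))"
      using assms(4) i unfolding m_def tangent_def by (simp add: dist_norm)
    moreover have "radius (qs!i) > 0" "radius (qs!(Suc i mod m)) > 0"
      using assms(3) i j unfolding m_def by auto
    ultimately show ?thesis
      using angle_term[OF th(1)[rule_format, OF i] e2] assms(2) th(2) i by auto
  qed
  have "(\<Sum>i<m. angle_sym (radius C) (radius (qs!i)) (radius (qs!(Suc i mod m))))
      = (\<Sum>i<m. thn \<theta> m i - \<theta> i)" using tm by simp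
  also have "\<dots> = 2*pi"
  proof -
    obtain m' where m': "m = Suc m'" using m by (cases m) auto
    have "(\<Sum>i<m. thn \<theta> m i - \<theta> i) = (\<Sum>i<m'. thn \<theta> m i - \<theta> i) + (thn \<theta> m m' - \<theta> m')"
      using m' by simp
    also have "(\<Sum>i<m'. thn \<theta> m i - \<theta> i) = (\<Sum>i<m'. \<theta> (Suc i) - \<theta> i)"
      using m' by (intro sum.cong) (auto simp: thn_def)
    also have "\<dots> = \<theta> m' - \<theta> 0" by (rule sum_lessThan_telescope)
    also have "thn \<theta> m m' = \<theta> 0 + 2*pi" using m' by (simp add: thn_def)
    finally show ?thesis by simp
  qed
  finally show ?thesis unfolding m_def .
qed



lemma finite_near:
  assumes "disjoint_interiors P" "r0 > 0" "\<forall>D\<in>P. radius D \<ge> r0"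
  shows "finite {D\<in>P. cmod (centre D - z) \<le> R}"
proof -
  define S where "S = {D\<in>P. cmod (centre D - z) \<le> R}"
  define \<delta> where "\<delta> = r0/2"
  have \<delta>: "\<delta> > 0" using assms \<delta>_def by simp
  define g where "g D = (round (Re (centre D) / \<delta>), round (Im (centre D) / \<delta>))" for D
  define pt where "pt D = Complex (\<delta> * of_int (fst (g D))) (\<delta> * of_int (snd (g D)))" for D
  have close: "cmod (centre D - pt D) < radius D" if "D \<in> P" for D
  proof -
    have r1: "\<bar>of_int (round (Re (centre D) / \<delta>)) - Re (centre D) / \<delta>\<bar> \<le> 1/2"
      by (rule of_int_round_abs_le)
    have r2: "\<bar>of_int (round (Im (centre D) / \<delta>)) - Im (centre D) / \<delta>\<bar> \<le> 1/2"
      by (rule of_int_round_abs_le)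
    have "\<bar>Re (centre D) - \<delta> * of_int (round (Re (centre D) / \<delta>))\<bar>
        = \<delta> * \<bar>of_int (round (Re (centre D) / \<delta>)) - Re (centre D) / \<delta>\<bar>"
      using \<delta> by (simp add: abs_mult_pos' field_simps abs_minus_commute)
    also have "\<dots> \<le> \<delta> / 2" using r1 \<delta> by simp
    finally have e1: "\<bar>Re (centre D - pt D)\<bar> \<le> \<delta>/2" by (simp add: pt_def g_def)
    have "\<bar>Im (centre D) - \<delta> * of_int (round (Im (centre D) / \<delta>))\<bar>
        = \<delta> * \<bar>of_int (round (Im (centre D) / \<delta>)) - Im (centre D) / \<delta>\<bar>"
      using \<delta> by (simp add: abs_mult_pos' field_simps abs_minus_commute)
    also have "\<dots> \<le> \<delta> / 2" using r2 \<delta> by simp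
    finally have e2: "\<bar>Im (centre D - pt D)\<bar> \<le> \<delta>/2" by (simp add: pt_def g_def)
    have "cmod (centre D - pt D) \<le> \<bar>Re (centre D - pt D)\<bar> + \<bar>Im (centre D - pt D)\<bar>"
      by (rule cmod_le)
    also have "\<dots> \<le> \<delta>" using e1 e2 by simp
    also have "\<dots> < r0" using \<delta> \<delta>_def by simp
    also have "\<dots> \<le> radius D" using assms that by simp
    finally show ?thesis .
  qed
  have inj: "inj_on g S"
  proof
    fix D E assume D: "D \<in> S" and E: "E \<in> S" and eq: "g D = g E"
    have "pt D = pt E" using eq by (simp add: pt_def)
    have c1: "cmod (centre D - pt D) < radius D" "cmod (centre E - pt E) < radius E"
      using close D E S_def by auto
    hence "pt D \<in> ball (centre D) (radius D)" "pt D \<in> ball (centre E) (radius E)"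
      using \<open>pt D = pt E\<close> by (auto simp: dist_norm)
    thus "D = E" using assms(1) D E unfolding S_def disjoint_interiors_def by blast
  qed
  define N where "N = ceiling ((cmod z + R) / \<delta> + 1)"
  have bd: "\<bar>round (x / \<delta>)\<bar> \<le> N" if "\<bar>x\<bar> \<le> cmod z + R" for x
  proof -
    have "\<bar>of_int (round (x / \<delta>)) - x / \<delta>\<bar> \<le> 1/2" by (rule of_int_round_abs_le)
    moreover have "\<bar>x / \<delta>\<bar> \<le> (cmod z + R) / \<delta>" using that \<delta>
      by (simp add: abs_divide divide_right_mono)
    ultimately have "\<bar>of_int (round (x / \<delta>))\<bar> \<le> (cmod z + R) / \<delta> + 1" by linarith
    also have "\<dots> \<le> of_int N" unfolding N_def by linarith
    finally show ?thesis by linarith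
  qed
  have "g ` S \<subseteq> {-N..N} \<times> {-N..N}"
  proof
    fix y assume "y \<in> g ` S"
    then obtain D where D: "D \<in> S" "y = g D" by blast
    have c: "cmod (centre D) \<le> cmod z + R"
      using D S_def norm_triangle_sub[of "centre D" z] by (smt (verit) mem_Collect_eq norm_minus_commute norm_triangle_ineq2)
    have "\<bar>Re (centre D)\<bar> \<le> cmod z + R" using abs_Re_le_cmod[of "centre D"] c by linarith
    moreover have "\<bar>Im (centre D)\<bar> \<le> cmod z + R" using abs_Im_le_cmod[of "centre D"] c by linarith
    ultimately have "\<bar>round (Re (centre D) / \<delta>)\<bar> \<le> N" "\<bar>round (Im (centre D) / \<delta>)\<bar> \<le> N"
      using bd by auto
    thus "y \<in> {-N..N} \<times> {-N..N}" using D unfolding g_def by auto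
  qed
  hence "finite (g ` S)" by (rule finite_subset) simp
  thus ?thesis using inj finite_imageD S_def by blast
qed

lemma tangent_sym: "tangent D E \<longleftrightarrow> tangent E D"
  unfolding tangent_def by (simp add: dist_commute add.commute)

lemma ccw_of_corona:
  assumes "corona C ps"
  shows "\<exists>qs. (qs = ps \<or> qs = rev ps) \<and> set qs = set ps \<and> ccw_around C qs \<and>
    (\<forall>i<length qs. tangent (qs!i) C \<and> tangent (qs!i) (qs!(Suc i mod length qs)))"
proof -
  have t: "\<forall>i<length ps. tangent (ps!i) C \<and> tangent (ps!i) (ps!(Suc i mod length ps))"
    using assms unfolding corona_def by simp
  have "ccw_around C ps \<or> ccw_around C (rev ps)" using assms unfolding corona_def around_def by simp
  thus ?thesis
  proof
    assume "ccw_around C ps" thus ?thesis using t by blast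
  next
    assume ccw: "ccw_around C (rev ps)"
    define m where "m = length ps"
    have m: "m > 0" using ccw unfolding ccw_around_def m_def by simp
    have "\<forall>i<length (rev ps). tangent (rev ps!i) C \<and> tangent (rev ps!i) (rev ps!(Suc i mod length (rev ps)))"
    proof (intro allI impI conjI)
      fix i assume i: "i < length (rev ps)"
      hence i': "i < m" by (simp add: m_def)
      show "tangent (rev ps!i) C" using t i' by (simp add: rev_nth m_def)
      define j where "j = m - 1 - Suc i mod m"
      have j: "j < m" using m j_def by simp
      have sj: "Suc j mod m = m - 1 - i"
      proof (cases "Suc i < m")
        case True
        hence "Suc i mod m = Suc i" by simp
        hence "j = m - 2 - i" using j_def by simp
        thus ?thesis using True by (simp add: Suc_diff_Suc numeral_2_eq_2)
      next
        case False
        hence "Suc i = m" using i' by simp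
        hence "j = m - 1" using j_def by simp
        thus ?thesis using \<open>Suc i = m\<close> m by simp
      qed
      have "tangent (ps!j) (ps!(Suc j mod m))" using t j m_def by simp
      moreover have "rev ps ! i = ps ! (m - 1 - i)" using i' by (simp add: rev_nth m_def)
      moreover have "rev ps ! (Suc i mod length (rev ps)) = ps ! j"
        using m by (simp add: rev_nth m_def j_def)
      ultimately show "tangent (rev ps!i) (rev ps!(Suc i mod length (rev ps)))"
        using sj tangent_sym by metis
    qed
    thus ?thesis using ccw by (intro exI[of _ "rev ps"]) auto
  qed
qed

lemma max_corona:
  assumes "compact_packing P" "C \<in> P" "r0 > 0" "\<forall>D\<in>P. radius D \<ge> r0" "\<forall>D\<in>P. radius D \<le> R1"
  shows "\<exists>ps. (C, ps) \<in> coronas P"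
proof -
  have dis: "disjoint_interiors P" using assms unfolding compact_packing_def by simp
  define S where "S = {D\<in>P. cmod (centre D - centre C) \<le> radius C + R1}"
  have finS: "finite S" unfolding S_def by (rule finite_near[OF dis assms(3,4)])
  define F where "F = {set qs | qs. set qs \<subseteq> P \<and> corona C qs}"
  have FS: "F \<subseteq> Pow S"
  proof
    fix X assume "X \<in> F"
    then obtain qs where q: "X = set qs" "set qs \<subseteq> P" "corona C qs" unfolding F_def by blast
    have "\<forall>i<length qs. tangent (qs!i) C" using q(3) unfolding corona_def by simp
    hence "\<forall>D\<in>set qs. tangent D C" by (metis in_set_conv_nth)
    hence "\<forall>D\<in>set qs. cmod (centre D - centre C) \<le> radius C + R1"
      using q(2) assms(5) unfolding tangent_def by (force simp: dist_norm)
    thus "X \<in> Pow S" using q unfolding S_def by auto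
  qed
  have finF: "finite F" using FS finS by (meson finite_Pow_iff finite_subset)
  have "F \<noteq> {}" using assms(1,2) unfolding compact_packing_def F_def by blast
  define k where "k = Max (card ` F)"
  have "k \<in> card ` F" unfolding k_def using finF \<open>F \<noteq> {}\<close> by simp
  then obtain X where X: "X \<in> F" "card X = k" by blast
  then obtain qs where q: "X = set qs" "set qs \<subseteq> P" "corona C qs" unfolding F_def by blast
  have "\<not> (\<exists>rs. set rs \<subseteq> P \<and> corona C rs \<and> set qs \<subset> set rs)"
  proof
    assume "\<exists>rs. set rs \<subseteq> P \<and> corona C rs \<and> set qs \<subset> set rs"
    then obtain rs where r: "set rs \<subseteq> P" "corona C rs" "set qs \<subset> set rs" by blast
    have "set rs \<in> F" using r unfolding F_def by blast
    hence "card (set rs) \<le> k" unfolding k_def using finF by simp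
    moreover have "card (set qs) < card (set rs)" using r(3) by (simp add: psubset_card_mono)
    ultimately show False using X q by simp
  qed
  thus ?thesis using q assms(2) unfolding coronas_def by blast
qed



lemma tangent_cmod: "tangent D E \<longleftrightarrow> cmod (centre D - centre E) = radius D + radius E"
  unfolding tangent_def by (simp add: dist_norm)

lemma no_finite_family:
  assumes "finite F" "F \<noteq> {}" "\<forall>E\<in>F. radius E > 0"
    "\<forall>E\<in>F. \<exists>qs. set qs \<subseteq> F \<and> ccw_around E qs"
  shows False
proof -
  define M where "M = Max ((\<lambda>E. Re (centre E)) ` F)"
  have "M \<in> (\<lambda>E. Re (centre E)) ` F" unfolding M_def using assms(1,2) by simp
  then obtain E where E: "E \<in> F" "Re (centre E) = M" by auto
  obtain qs where q: "set qs \<subseteq> F" "ccw_around E qs" using assms(4) E by blast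
  obtain i where i: "i < length qs" "Re (centre (qs!i)) > Re (centre E)"
    using extreme[OF q(2)] assms(3) E q(1) by blast
  have "qs!i \<in> F" using q(1) i(1) by auto
  hence "Re (centre (qs!i)) \<le> M" unfolding M_def using assms(1) by simp
  thus False using i E by simp
qed

lemma edge_block:
  assumes "disjoint_interiors P" "\<forall>D\<in>P. radius D > 0" "X \<in> P" "Y \<in> P" "Z \<in> P" "Z \<noteq> X" "Z \<noteq> Y"
    "cmod (centre X - centre Y) = radius X + radius Y" "q \<in> closed_segment (centre X) (centre Y)"
  shows "cmod (centre Z - q) > radius Z"
proof -
  have "cmod (centre Z - centre X) \<ge> radius Z + radius X" using sep[OF assms(1) assms(5,3,6)] assms by auto
  moreover have "cmod (centre Z - centre Y) \<ge> radius Z + radius Y" using sep[OF assms(1) assms(5,4,7)] assms by auto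
  ultimately show ?thesis using L3[OF _ _ _ assms(8) _ _ assms(9)] assms by auto
qed



lemma no_two:
  assumes dis: "disjoint_interiors P" and r0: "r0 > 0" "\<forall>D\<in>P. radius D \<ge> r0"
    and R1: "\<forall>D\<in>P. radius D \<le> R1"
    and Q: "Q \<subseteq> P" "Q' \<subseteq> P" "Q \<inter> Q' = {}" "Q \<noteq> {}" "Q' \<noteq> {}"
    and cQ: "\<forall>C\<in>Q. \<exists>ps. set ps \<subseteq> Q \<and> corona C ps"
    and cQ': "\<forall>C\<in>Q'. \<exists>ps. set ps \<subseteq> Q' \<and> corona C ps"
  shows False
proof -
  have pos: "\<forall>D\<in>P. radius D > 0" using r0 by (meson less_le_trans)
  obtain B where B: "B \<in> Q'" using Q by blast
  obtain A0 where A0: "A0 \<in> Q" using Q by blast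
  define gap where "gap D = cmod (centre D - centre B) - radius D" for D
  define S where "S = {D\<in>Q. gap D \<le> gap A0}"
  have "S \<subseteq> {D\<in>P. cmod (centre D - centre B) \<le> gap A0 + R1}"
    using Q(1) R1 unfolding S_def gap_def by force
  hence finS: "finite S" using finite_near[OF dis r0] finite_subset by blast
  have "A0 \<in> S" using A0 unfolding S_def by simp
  define g where "g = Min (gap ` S)"
  have "g \<in> gap ` S" unfolding g_def using finS \<open>A0 \<in> S\<close> by (intro Min_in) auto
  then obtain A where A: "A \<in> S" "gap A = g" by blast
  have Amin: "gap A \<le> gap D" if "D \<in> Q" for D
  proof (cases "D \<in> S")
    case True thus ?thesis using A finS unfolding g_def by simp
  next
    case False
    hence "gap D > gap A0" using that unfolding S_def by simp
    moreover have "gap A \<le> gap A0" using A finS \<open>A0 \<in> S\<close> unfolding g_def by simp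
    ultimately show ?thesis by simp
  qed
  have AQ: "A \<in> Q" using A S_def by simp
  obtain ps where ps: "set ps \<subseteq> Q" "corona A ps" using cQ AQ by blast
  obtain qs where qs: "set qs = set ps" "ccw_around A qs"
    "\<forall>i<length qs. tangent (qs!i) A \<and> tangent (qs!i) (qs!(Suc i mod length qs))"
    using ccw_of_corona[OF ps(2)] by blast
  have Anot: "A \<notin> set qs" using ps(2) qs(1) unfolding corona_def by simp
  have qsQ: "set qs \<subseteq> Q" using qs ps by simp
  have posA: "radius A > 0" using pos AQ Q by auto
  have posq: "\<forall>D\<in>set qs. radius D > 0" using pos qsQ Q by auto
  define m where "m = length qs"
  have m: "m > 0" using qs(2) unfolding ccw_around_def m_def by simp
  obtain k s t where k: "k < m" "s \<ge> 0" "t \<ge> 0"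
    "centre B - centre A = complex_of_real s * (centre (qs!k) - centre A)
       + complex_of_real t * (centre (qs!(Suc k mod m)) - centre A)"
    using cone[OF qs(2) posA posq, of "centre B - centre A"] unfolding m_def by blast
  define Dk where "Dk = qs!k"
  define Dn where "Dn = qs!(Suc k mod m)"
  have DkQ: "Dk \<in> Q" "Dn \<in> Q" using qsQ k m unfolding Dk_def Dn_def m_def by auto
  have DkA: "Dk \<noteq> A" "Dn \<noteq> A" using Anot k m unfolding Dk_def Dn_def m_def by auto
  have tg1: "cmod (centre Dk - centre A) = radius Dk + radius A"
    using qs(3) k unfolding Dk_def m_def tangent_cmod by simp
  have tg2: "cmod (centre Dn - centre A) = radius Dn + radius A"
    using qs(3) k m unfolding Dn_def m_def tangent_cmod by simp
  have tg3: "cmod (centre Dk - centre Dn) = radius Dk + radius Dn"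
    using qs(3) k unfolding Dk_def Dn_def m_def tangent_cmod by simp
  have inP: "A \<in> P" "Dk \<in> P" "Dn \<in> P" using AQ DkQ Q by auto
  show False
  proof (cases "s + t > 1")
    case True
    define u where "u = s + t"
    have u: "u > 1" using True u_def by simp
    define a where "a = centre A"
    define b where "b = centre B"
    define dk where "dk = centre Dk"
    define dn where "dn = centre Dn"
    have bk: "b - a = complex_of_real s * (dk - a) + complex_of_real t * (dn - a)"
      using k(4) unfolding a_def b_def dk_def dn_def Dk_def Dn_def by simp
    define p where "p = a + complex_of_real (1/u) * (b - a)"
    have pe: "p = complex_of_real (1 - t/u) * dk + complex_of_real (t/u) * dn"
    proof -
      have "p = a + complex_of_real (1/u) * (complex_of_real s * (dk - a) + complex_of_real t * (dn - a))"
        unfolding p_def bk ..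
      also have "\<dots> = complex_of_real (1 - t/u) * dk + complex_of_real (t/u) * dn"
      proof -
        have se: "s = u - t" using u_def by simp
        show ?thesis using u unfolding se by (simp add: complex_eq_iff field_simps)
      qed
      finally show ?thesis .
    qed
    have pseg: "p \<in> closed_segment dk dn"
    proof -
      have "0 \<le> t/u" "t/u \<le> 1" using u k(2,3) u_def by auto
      thus ?thesis unfolding closed_segment_def
        by (intro CollectI exI[of _ "t/u"]) (auto simp: pe scaleR_conv_of_real)
    qed
    have pa: "cmod (a - p) > radius A"
      using edge_block[OF dis pos inP(2,3,1) DkA(1)[symmetric] DkA(2)[symmetric] tg3] pseg unfolding a_def dk_def dn_def by blast
    have n1: "cmod (p - a) = cmod (b - a) / u"
    proof -
      have "p - a = complex_of_real (1/u) * (b - a)" unfolding p_def by simp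
      hence "cmod (p - a) = \<bar>1/u\<bar> * cmod (b - a)" by (simp only: norm_mult norm_of_real)
      thus ?thesis using u by simp
    qed
    have "b - p = complex_of_real (1 - 1/u) * (b - a)" unfolding p_def by (simp add: algebra_simps)
    hence "cmod (b - p) = (1 - 1/u) * cmod (b - a)" using u by (simp only: norm_mult norm_of_real) simp
    hence bp: "cmod (b - p) = cmod (b - a) - cmod (p - a)" using n1 by (simp add: algebra_simps)
    have cov: "cmod (p - dk) \<le> radius Dk \<or> cmod (p - dn) \<le> radius Dn"
      using cover[OF _ pseg] tg3 posq DkQ inP pos unfolding dk_def dn_def by (meson less_imp_le)
    have "\<exists>X\<in>Q. cmod (p - centre X) \<le> radius X" using cov DkQ unfolding dk_def dn_def by blast
    then obtain X where X: "X \<in> Q" "cmod (p - centre X) \<le> radius X" by blast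
    have "gap X = cmod (centre X - b) - radius X" unfolding gap_def b_def ..
    also have "\<dots> \<le> cmod (centre X - p) + cmod (p - b) - radius X"
      using norm_triangle_ineq[of "centre X - p" "p - b"] by simp
    also have "\<dots> \<le> cmod (b - p)" using X(2) by (simp add: norm_minus_commute)
    also have "\<dots> < cmod (b - a) - radius A" using bp pa by (simp add: norm_minus_commute)
    also have "\<dots> = gap A" unfolding gap_def a_def b_def by (simp add: norm_minus_commute)
    finally show False using Amin[OF X(1)] by simp
  next
    case False
    define T where "T = convex hull {centre A, centre Dk, centre Dn}"
    have bT: "centre B \<in> T"
    proof -
      have "centre B = centre A + s *\<^sub>R (centre Dk - centre A) + t *\<^sub>R (centre Dn - centre A)"
        using k(4) unfolding Dk_def Dn_def scaleR_conv_of_real by (simp add: algebra_simps)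
      thus ?thesis unfolding T_def convex_hull_3_alt using k(2,3) False
        by (intro CollectI exI[of _ s] exI[of _ t]) auto
    qed
    have nQ: "\<And>E. E \<in> Q' \<Longrightarrow> E \<noteq> A \<and> E \<noteq> Dk \<and> E \<noteq> Dn" using AQ DkQ Q(3) by blast
    have petal: "centre E' \<in> T" if E: "E \<in> Q'" "E' \<in> Q'"
      "cmod (centre E - centre E') = radius E + radius E'" "centre E \<in> T" for E E'
    proof (rule ccontr)
      assume nt: "centre E' \<notin> T"
      have "closed_segment (centre E) (centre E') \<inter> frontier T \<noteq> {}"
        using E(4) nt by (intro connected_Int_frontier) auto
      then obtain q where q: "q \<in> closed_segment (centre E) (centre E')" "q \<in> frontier T" by blast
      have fr: "frontier T = closed_segment (centre A) (centre Dk) \<union> closed_segment (centre Dk) (centre Dn)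
          \<union> closed_segment (centre Dn) (centre A)"
        unfolding T_def by (rule frontier_of_triangle) simp
      have EP: "E \<in> P" "E' \<in> P" using E Q by auto
      have "cmod (q - centre E) \<le> radius E \<or> cmod (q - centre E') \<le> radius E'"
        using cover[OF E(3) q(1)] pos EP by (meson less_imp_le)
      then obtain Z where Z: "Z \<in> Q'" "cmod (centre Z - q) \<le> radius Z"
        using E by (metis norm_minus_commute)
      have ZP: "Z \<in> P" using Z Q by auto
      have Zn: "Z \<noteq> A" "Z \<noteq> Dk" "Z \<noteq> Dn" using nQ Z by auto
      have tg1': "cmod (centre A - centre Dk) = radius A + radius Dk" using tg1 by (simp add: norm_minus_commute)
      have tg2': "cmod (centre Dn - centre A) = radius Dn + radius A" using tg2 by simp
      have "cmod (centre Z - q) > radius Z"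
        using q(2) unfolding fr
      proof (elim UnE)
        assume "q \<in> closed_segment (centre A) (centre Dk)"
        thus ?thesis using edge_block[OF dis pos inP(1,2) ZP Zn(1,2) tg1'] by blast
      next
        assume "q \<in> closed_segment (centre Dk) (centre Dn)"
        thus ?thesis using edge_block[OF dis pos inP(2,3) ZP Zn(2,3) tg3] by blast
      next
        assume "q \<in> closed_segment (centre Dn) (centre A)"
        thus ?thesis using edge_block[OF dis pos inP(3,1) ZP Zn(3,1) tg2'] by blast
      qed
      thus False using Z by simp
    qed
    define F where "F = {E\<in>Q'. centre E \<in> T}"
    have "bounded T" unfolding T_def by (intro finite_imp_bounded_convex_hull) simp
    then obtain M where M: "\<forall>x\<in>T. cmod x \<le> M" unfolding bounded_iff by blast
    have "F \<subseteq> {D\<in>P. cmod (centre D - 0) \<le> M}" using M Q unfolding F_def by auto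
    hence finF: "finite F" using finite_near[OF dis r0] finite_subset by blast
    have "B \<in> F" using B bT unfolding F_def by simp
    have "\<forall>E\<in>F. \<exists>qs. set qs \<subseteq> F \<and> ccw_around E qs"
    proof
      fix E assume EF: "E \<in> F"
      obtain ps' where ps': "set ps' \<subseteq> Q'" "corona E ps'" using cQ' EF F_def by blast
      obtain qs' where qs': "set qs' = set ps'" "ccw_around E qs'"
        "\<forall>i<length qs'. tangent (qs'!i) E \<and> tangent (qs'!i) (qs'!(Suc i mod length qs'))"
        using ccw_of_corona[OF ps'(2)] by blast
      have "set qs' \<subseteq> F"
      proof
        fix D assume D: "D \<in> set qs'"
        then obtain i where i: "i < length qs'" "D = qs'!i" by (metis in_set_conv_nth)
        have "cmod (centre E - centre D) = radius E + radius D"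
          using qs'(3) i unfolding tangent_cmod by (simp add: norm_minus_commute add.commute)
        moreover have "D \<in> Q'" using D qs' ps' by auto
        ultimately have "centre D \<in> T" using petal[of E D] EF F_def by simp
        thus "D \<in> F" using \<open>D \<in> Q'\<close> F_def by simp
      qed
      thus "\<exists>qs. set qs \<subseteq> F \<and> ccw_around E qs" using qs' by blast
    qed
    moreover have "\<forall>E\<in>F. radius E > 0" using pos Q F_def by auto
    ultimately show False using no_finite_family finF \<open>B \<in> F\<close> by blast
  qed
qed



lemma angle_sym_comm: "angle_sym c a b = angle_sym c b a"
proof -
  have "(c+a)^2+(c+b)^2-(a+b)^2 = (c+b)^2+(c+a)^2-(b+a)^2" "2*(c+a)*(c+b) = 2*(c+b)*(c+a)"
    by (simp_all add: algebra_simps)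
  thus ?thesis unfolding angle_sym_def by metis
qed

lemma angle_sum_rotate1: "angle_sum \<tau> (c, rotate1 l) = angle_sum \<tau> (c, l)"
proof (cases l)
  case Nil thus ?thesis by simp
next
  case (Cons x xs)
  define m where "m = length l"
  have m: "m = Suc (length xs)" using Cons m_def by simp
  define h where "h i = angle_sym (\<tau> c) (\<tau> (l!i)) (\<tau> (l!(Suc i mod m)))" for i
  have aux: "rotate1 l ! (Suc x mod length l) = l ! (Suc (Suc x mod length l) mod length l)" for x
    by (rule nth_rotate1) (simp add: Cons)
  have aux2: "x < length l \<Longrightarrow> rotate1 l ! x = l ! (Suc x mod length l)" for x
    by (rule nth_rotate1)
  have lhs: "angle_sum \<tau> (c, rotate1 l) = (\<Sum>i<m. h (Suc i mod m))"
  proof -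
    have "angle_sum \<tau> (c, rotate1 l) = (\<Sum>i<m. angle_sym (\<tau> c) (\<tau> (rotate1 l ! i)) (\<tau> (rotate1 l ! (Suc i mod m))))"
      unfolding angle_sum_def m_def by simp
    also have "\<dots> = (\<Sum>i<m. h (Suc i mod m))"
    proof (rule sum.cong[OF refl])
      fix i assume "i \<in> {..<m}"
      hence i: "i < length l" using m_def by simp
      show "angle_sym (\<tau> c) (\<tau> (rotate1 l ! i)) (\<tau> (rotate1 l ! (Suc i mod m))) = h (Suc i mod m)"
        unfolding h_def using aux[of i] aux2[OF i] m_def by simp
    qed
    finally show ?thesis .
  qed
  have "(\<Sum>i<m. h (Suc i mod m)) = (\<Sum>i<length xs. h (Suc i mod m)) + h (Suc (length xs) mod m)"
    using m by simp
  also have "(\<Sum>i<length xs. h (Suc i mod m)) = (\<Sum>i<length xs. h (Suc i))"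
    using m by (intro sum.cong) auto
  also have "h (Suc (length xs) mod m) = h 0" using m by simp
  also have "(\<Sum>i<length xs. h (Suc i)) + h 0 = (\<Sum>i<m. h i)"
    unfolding m sum.lessThan_Suc_shift by simp
  also have "\<dots> = angle_sum \<tau> (c, l)" unfolding angle_sum_def h_def m_def by simp
  finally show ?thesis using lhs by simp
qed

lemma angle_sum_rotate: "angle_sum \<tau> (c, rotate k l) = angle_sum \<tau> (c, l)"
  by (induction k) (simp_all add: angle_sum_rotate1)

lemma angle_sum_rev: "angle_sum \<tau> (c, rev l) = angle_sum \<tau> (c, l)"
proof (cases "l = []")
  case True thus ?thesis by simp
next
  case False
  define m where "m = length l"
  have m: "m > 0" using False m_def by simp
  define j where "j a = m - 1 - Suc a mod m" for a
  have jm: "j a < m" for a using m j_def by simp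
  have sj: "Suc (j a) mod m = m - 1 - a" if "a < m" for a
  proof (cases "Suc a < m")
    case True
    hence "j a = m - 2 - a" using j_def by simp
    thus ?thesis using True by (simp add: Suc_diff_Suc numeral_2_eq_2)
  next
    case False
    hence "Suc a = m" using that by simp
    hence "j a = m - 1" using j_def by simp
    thus ?thesis using \<open>Suc a = m\<close> m by simp
  qed
  have jj: "j (j a) = a" if "a < m" for a
  proof -
    have "j (j a) = m - 1 - (m - 1 - a)" using sj[OF that] j_def by simp
    thus ?thesis using that by simp
  qed
  show ?thesis
    unfolding angle_sum_def fst_conv snd_conv length_rev m_def[symmetric]
  proof (rule sum.reindex_bij_witness[where i=j and j=j])
    fix a assume a: "a \<in> {..<m}"
    show "j (j a) = a" using jj a by simp
    show "j a \<in> {..<m}" using jm by simp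
    show "j (j a) = a" using jj a by simp
    show "j a \<in> {..<m}" using jm by simp
    have a': "a < m" using a by simp
    have e1: "rev l ! a = l ! (Suc (j a) mod m)" using a' sj[OF a'] m_def by (simp add: rev_nth)
    have e2: "rev l ! (Suc a mod m) = l ! j a" using m m_def by (simp add: rev_nth j_def)
    show "angle_sym (\<tau> c) (\<tau> (l ! j a)) (\<tau> (l ! ((j a + 1) mod m)))
        = angle_sym (\<tau> c) (\<tau> (rev l ! a)) (\<tau> (rev l ! ((a + 1) mod m)))"
      using e1 e2 angle_sym_comm by simp
  qed
qed

lemma angle_sum_class:
  assumes "y \<in> code_class x"
  shows "angle_sum \<tau> y = angle_sum \<tau> x"
proof -
  have "code_equiv x y" using assms unfolding code_class_def by simp
  then obtain k where "fst y = fst x" "snd y = rotate k (snd x) \<or> snd y = rev (rotate k (snd x))"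
    unfolding code_equiv_def by auto
  thus ?thesis
    by (metis angle_sum_rev angle_sum_rotate prod.collapse)
qed

lemma self_class: "x \<in> code_class x"
  unfolding code_class_def code_equiv_def by (auto intro: exI[of _ 0])

lemma angle_sym_alt:
  assumes "c > 0" "a > 0" "b > 0"
  shows "angle_sym c a b = arccos (1 - 2 * (a/(c+a)) * (b/(c+b)))"
proof -
  have e: "(c+a)^2+(c+b)^2-(a+b)^2 = 2*(c+a)*(c+b) - 4*a*b" by (simp add: power2_eq_square algebra_simps)
  have g: "(2*p*q - 4*a*b)/(2*p*q) = 1 - 2*(a/p)*(b/q)" if "p > 0" "q > 0" for p q
    using that by (simp add: field_simps)
  have "((c + a)^2 + (c + b)^2 - (a + b)^2) / (2 * (c + a) * (c + b)) = 1 - 2 * (a/(c+a)) * (b/(c+b))"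
    unfolding e using assms by (intro g) auto
  thus ?thesis unfolding angle_sym_def by simp
qed

lemma angle_sym_hom:
  assumes "k > 0" "c > 0" "a > 0" "b > 0"
  shows "angle_sym (k*c) (k*a) (k*b) = angle_sym c a b"
proof -
  have "k*c+k*a = k*(c+a)" "k*c+k*b = k*(c+b)" by (simp_all add: algebra_simps)
  hence "k*a/(k*c+k*a) = a/(c+a)" "k*b/(k*c+k*b) = b/(c+b)"
    using assms by simp_all
  thus ?thesis using assms by (simp add: angle_sym_alt)
qed

lemma frac_mono:
  fixes a a' c :: real
  assumes "c > 0" "0 < a" "a \<le> a'"
  shows "a/(c+a) \<le> a'/(c+a')"
proof -
  have "a*(c+a') \<le> a'*(c+a)" using assms by (simp add: algebra_simps mult_left_mono)
  thus ?thesis using assms by (simp add: divide_simps)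
qed

lemma frac_mono_strict:
  fixes a a' c :: real
  assumes "c > 0" "0 < a" "a < a'"
  shows "a/(c+a) < a'/(c+a')"
proof -
  have "a*(c+a') < a'*(c+a)" using assms by (simp add: algebra_simps)
  thus ?thesis using assms by (simp add: divide_simps)
qed

lemma frac_bounds: "(c::real) > 0 \<Longrightarrow> a > 0 \<Longrightarrow> 0 < a/(c+a) \<and> a/(c+a) < 1"
  by (simp add: divide_simps)

lemma arccos_mono2:
  fixes x x' y y' :: real
  assumes "0 < x" "x \<le> x'" "x' < 1" "0 < y" "y \<le> y'" "y' < 1"
  shows "arccos (1 - 2*x*y) \<le> arccos (1 - 2*x'*y')"
    and "x < x' \<Longrightarrow> arccos (1 - 2*x*y) < arccos (1 - 2*x'*y')"
proof -
  have xy: "x*y \<le> x'*y'" using assms by (intro mult_mono) auto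
  have "x'*y' \<le> 1" using assms by (intro mult_le_one) auto
  hence b1: "-1 \<le> 1 - 2*x'*y'" by simp
  have b2: "1 - 2*x*y \<le> 1" using assms by simp
  show "arccos (1 - 2*x*y) \<le> arccos (1 - 2*x'*y')"
    using b1 b2 xy by (intro arccos_le_arccos) auto
  assume "x < x'"
  hence "x*y < x'*y" using assms by (intro mult_strict_right_mono) auto
  also have "\<dots> \<le> x'*y'" using assms by (intro mult_left_mono) auto
  finally have "x*y < x'*y'" .
  thus "arccos (1 - 2*x*y) < arccos (1 - 2*x'*y')"
    using b1 b2 by (intro arccos_less_arccos) auto
qed

lemma angle_sym_mono:
  assumes "c > 0" "0 < a" "a \<le> a'" "0 < b" "b \<le> b'"
  shows "angle_sym c a b \<le> angle_sym c a' b'"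
    and "a < a' \<Longrightarrow> angle_sym c a b < angle_sym c a' b'"
proof -
  have pa: "a' > 0" "b' > 0" using assms by auto
  note e = angle_sym_alt[OF assms(1,2,4)] angle_sym_alt[OF assms(1) pa]
  note fb = frac_bounds[OF assms(1) assms(2)] frac_bounds[OF assms(1) assms(4)]
    frac_bounds[OF assms(1) pa(1)] frac_bounds[OF assms(1) pa(2)]
  note fm = frac_mono[OF assms(1,2,3)] frac_mono[OF assms(1,4,5)]
  note am = arccos_mono2[of "a/(c+a)" "a'/(c+a')" "b/(c+b)" "b'/(c+b')"]
  show "angle_sym c a b \<le> angle_sym c a' b'" unfolding e using am(1) fb fm by blast
  assume lt: "a < a'"
  show "angle_sym c a b < angle_sym c a' b'" unfolding e
    using am(2) fb fm frac_mono_strict[OF assms(1,2) lt] by blast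
qed



lemma force:
  assumes "\<sigma>1 c = \<sigma>2 c" "\<sigma>1 c > 0" "\<forall>x\<in>set l. 0 < \<sigma>1 x \<and> \<sigma>1 x \<le> \<sigma>2 x"
    "angle_sum \<sigma>1 (c,l) = angle_sum \<sigma>2 (c,l)"
  shows "\<forall>x\<in>set l. \<sigma>1 x = \<sigma>2 x"
proof (rule ccontr)
  assume "\<not> ?thesis"
  then obtain x where x: "x \<in> set l" "\<sigma>1 x \<noteq> \<sigma>2 x" by blast
  then obtain i where i: "i < length l" "l!i = x" by (metis in_set_conv_nth)
  define m where "m = length l"
  define T1 where "T1 j = angle_sym (\<sigma>1 c) (\<sigma>1 (l!j)) (\<sigma>1 (l!(Suc j mod m)))" for j
  define T2 where "T2 j = angle_sym (\<sigma>2 c) (\<sigma>2 (l!j)) (\<sigma>2 (l!(Suc j mod m)))" for j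
  have mem: "l!j \<in> set l" "l!(Suc j mod m) \<in> set l" if "j < m" for j
    using that m_def by (auto intro!: nth_mem mod_less_divisor)
  have le: "T1 j \<le> T2 j" if "j \<in> {..<m}" for j
    unfolding T1_def T2_def assms(1)[symmetric]
    using that mem[of j] assms(2,3) by (intro angle_sym_mono(1)) auto
  have "T1 i < T2 i"
    unfolding T1_def T2_def assms(1)[symmetric]
    using i mem[of i] assms(2,3) x m_def by (intro angle_sym_mono(2)) (auto simp: order.strict_iff_order)
  hence "sum T1 {..<m} < sum T2 {..<m}" using le i m_def by (intro sum_strict_mono_ex1) auto
  moreover have "angle_sum \<sigma>1 (c,l) = sum T1 {..<m}" "angle_sum \<sigma>2 (c,l) = sum T2 {..<m}"
    unfolding angle_sum_def T1_def T2_def m_def by simp_all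
  ultimately show False using assms(4) by simp
qed

lemma angle_sum_scale:
  assumes "k > 0" "\<forall>x\<in>insert c (set l). \<tau> x > 0"
  shows "angle_sum (\<lambda>i. k * \<tau> i) (c,l) = angle_sum \<tau> (c,l)"
  unfolding angle_sum_def fst_conv snd_conv
proof (rule sum.cong[OF refl])
  fix i assume "i \<in> {..<length l}"
  hence "l!i \<in> set l" "l!((i+1) mod length l) \<in> set l" by (auto intro!: nth_mem mod_less_divisor)
  thus "angle_sym (k * \<tau> c) (k * \<tau> (l ! i)) (k * \<tau> (l ! ((i + 1) mod length l)))
      = angle_sym (\<tau> c) (\<tau> (l ! i)) (\<tau> (l ! ((i + 1) mod length l)))"
    using assms by (intro angle_sym_hom) auto
qed



theorem theorem4p3:
  fixes n :: nat and P :: "disc set"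
  assumes "n \<ge> 2"
    and "compact_packing P"
    and "card (radii P) = n"
    and "Max (radii P) = 1"
  shows "{\<tau> \<in> {0..<n} \<rightarrow>\<^sub>E {0<..}. \<tau> (n - 1) = 1 \<and> tightly_realizes \<tau> (code_of P ` coronas P)}
         = {canonical_realizer P}"
proof -
  define R where "R = radii P"
  have finR: "finite R" using assms(1,3) R_def by (metis card.infinite not_numeral_le_zero)
  have Rne: "R \<noteq> {}" using assms(1,3) R_def by auto
  define sl where "sl = sorted_list_of_set R"
  have len: "length sl = n" using assms(3) R_def sl_def by simp
  have setsl: "set sl = R" using finR sl_def by simp
  have dsl: "distinct sl" using sl_def by simp
  have ssl: "sorted sl" using sl_def by simp
  have dis: "disjoint_interiors P" using assms(2) unfolding compact_packing_def by simp
  have pos: "\<forall>D\<in>P. radius D > 0" using assms(2) unfolding compact_packing_def is_disc_def by simp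
  have RP: "R = radius ` P" unfolding R_def radii_def ..
  have Rpos: "\<forall>x\<in>R. x > 0" using pos RP by auto
  have lab: "label P D < n \<and> sl ! label P D = radius D" if D: "D \<in> P" for D
  proof -
    have "radius D \<in> set sl" using setsl RP D by auto
    then obtain i where i: "i < n" "sl ! i = radius D" using len by (auto simp: in_set_conv_nth)
    have uq: "j = i" if "j < n \<and> sl ! j = radius D" for j
    proof -
      have "sl!j = sl!i" using that i by simp
      thus "j = i" using nth_eq_iff_index_eq[OF dsl, of j i] len that i by simp
    qed
    have "label P D = i" unfolding label_def R_def[symmetric] sl_def[symmetric] assms(3)[folded R_def]
    proof (rule the_equality)
      show "i < n \<and> sl ! i = radius D" using i by simp
      show "\<And>j. j < n \<and> sl ! j = radius D \<Longrightarrow> j = i" using uq by blast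
    qed
    thus ?thesis using i by simp
  qed
  define \<rho> where "\<rho> = canonical_realizer P"
  have \<rho>i: "\<rho> i = sl ! i" if "i < n" for i
    using that unfolding \<rho>_def canonical_realizer_def R_def[symmetric] sl_def[symmetric] assms(3)[folded R_def]
    by simp
  have \<rho>lab: "\<rho> (label P D) = radius D" if "D \<in> P" for D using lab[OF that] \<rho>i by simp
  have \<rho>pos: "\<rho> i > 0" if "i < n" for i
  proof -
    have "sl ! i \<in> set sl" using that len by (intro nth_mem) simp
    thus ?thesis using \<rho>i[OF that] setsl Rpos by simp
  qed
  have \<rho>last: "\<rho> (n - 1) = 1"
  proof -
    have nn: "n - 1 < n" using assms(1) by simp
    have "sl ! (n-1) \<in> set sl" using nn len by (intro nth_mem) simp
    hence "sl ! (n-1) \<in> R" using setsl by simp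
    moreover have "x \<le> sl ! (n-1)" if "x \<in> R" for x
    proof -
      have "x \<in> set sl" using that setsl by simp
      then obtain j where "j < n" "sl ! j = x" using len by (auto simp: in_set_conv_nth)
      thus ?thesis using sorted_nth_mono[OF ssl, of j "n-1"] len nn by simp
    qed
    ultimately have "Max R = sl ! (n-1)" using finR by (intro Max_eqI) auto
    thus ?thesis using \<rho>i[OF nn] assms(4) R_def by simp
  qed
  have surj: "\<exists>D\<in>P. label P D = i" if "i < n" for i
  proof -
    have "sl ! i \<in> set sl" using that len by (intro nth_mem) simp
    hence "sl ! i \<in> R" using setsl by simp
    then obtain D where D: "D \<in> P" "radius D = sl ! i" using RP by auto
    have "sl ! label P D = sl ! i" "label P D < n" using lab[OF D(1)] D(2) by auto
    hence "label P D = i" using nth_eq_iff_index_eq[OF dsl, of "label P D" i] len that by simp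
    thus ?thesis using D by blast
  qed
  define r0 where "r0 = Min R"
  define R1 where "R1 = Max R"
  have r0: "r0 > 0" using Rpos finR Rne r0_def by simp
  have r0le: "\<forall>D\<in>P. radius D \<ge> r0" using finR RP r0_def by simp
  have R1ge: "\<forall>D\<in>P. radius D \<le> R1" using finR RP R1_def by simp
  have geo: "angle_sum \<rho> (label P C, map (label P) ps) = 2*pi" if cor: "(C, ps) \<in> coronas P" for C ps
  proof -
    have C: "C \<in> P" "set ps \<subseteq> P" "corona C ps" using cor unfolding coronas_def by auto
    obtain qs where qs: "qs = ps \<or> qs = rev ps" "set qs = set ps" "ccw_around C qs"
      "\<forall>i<length qs. tangent (qs!i) C \<and> tangent (qs!i) (qs!(Suc i mod length qs))"
      using ccw_of_corona[OF C(3)] by blast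
    have qP: "set qs \<subseteq> P" using qs C by simp
    have ql: "\<forall>D\<in>set qs. radius D > 0" using qP pos by auto
    have "angle_sum \<rho> (label P C, map (label P) qs)
        = (\<Sum>i<length qs. angle_sym (radius C) (radius (qs!i)) (radius (qs!(Suc i mod length qs))))"
      unfolding angle_sum_def fst_conv snd_conv length_map
    proof (rule sum.cong[OF refl])
      fix i assume "i \<in> {..<length qs}"
      hence i: "i < length qs" by simp
      have "qs!i \<in> set qs" "qs!(Suc i mod length qs) \<in> set qs" using i by (auto intro!: nth_mem mod_less_divisor)
      hence "qs!i \<in> P" "qs!(Suc i mod length qs) \<in> P" using qP by auto
      show "angle_sym (\<rho> (label P C)) (\<rho> (map (label P) qs ! i)) (\<rho> (map (label P) qs ! ((i + 1) mod length qs)))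
        = angle_sym (radius C) (radius (qs!i)) (radius (qs!(Suc i mod length qs)))"
      proof -
        have "map (label P) qs ! (Suc i mod length qs) = label P (qs ! (Suc i mod length qs))"
          using i by (intro nth_map mod_less_divisor) auto
        thus ?thesis using i \<rho>lab C(1) \<open>qs!i \<in> P\<close> \<open>qs!(Suc i mod length qs) \<in> P\<close> by simp
      qed
    qed
    also have "\<dots> = 2*pi" using angle_geom[OF qs(3)] pos C(1) ql qs(4) by simp
    finally have "angle_sum \<rho> (label P C, map (label P) qs) = 2*pi" .
    thus ?thesis using qs(1) by (auto simp: rev_map[symmetric] angle_sum_rev)
  qed
  have \<rho>in: "canonical_realizer P \<in> {\<tau> \<in> {0..<n} \<rightarrow>\<^sub>E {0<..}. \<tau> (n - 1) = 1 \<and> tightly_realizes \<tau> (code_of P ` coronas P)}"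
  proof -
    have "\<rho> \<in> {0..<n} \<rightarrow>\<^sub>E {0<..}"
      unfolding \<rho>_def canonical_realizer_def R_def[symmetric] sl_def[symmetric] assms(3)[folded R_def] restrict_PiE_iff
      using \<rho>pos \<rho>i by simp
    moreover have "tightly_realizes \<rho> (code_of P ` coronas P)"
      unfolding tightly_realizes_def tightly_realizes_code_def
    proof (intro ballI)
      fix X x assume X: "X \<in> code_of P ` coronas P" and x: "x \<in> X"
      then obtain C ps where cp: "(C,ps) \<in> coronas P" "X = code_class (label P C, map (label P) ps)"
        unfolding code_of_def by auto
      show "angle_sum \<rho> x = 2*pi" using angle_sum_class[of x] cp x geo by simp
    qed
    ultimately show ?thesis using \<rho>last \<rho>_def by simp
  qed
  have uniq: "\<tau> = canonical_realizer P"
    if \<tau>: "\<tau> \<in> {0..<n} \<rightarrow>\<^sub>E {0<..}" "\<tau> (n - 1) = 1" "tightly_realizes \<tau> (code_of P ` coronas P)" for \<tau>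
  proof -
    have \<tau>pos: "\<tau> i > 0" if "i < n" for i using PiE_mem[OF \<tau>(1)] that by auto
    have tight: "angle_sum \<tau> (label P C, map (label P) ps) = 2*pi" if "(C, ps) \<in> coronas P" for C ps
    proof -
      have "code_of P (C,ps) \<in> code_of P ` coronas P" using that by simp
      moreover have "(label P C, map (label P) ps) \<in> code_of P (C,ps)" unfolding code_of_def by (simp add: self_class)
      ultimately show ?thesis using \<tau>(3) unfolding tightly_realizes_def tightly_realizes_code_def by blast
    qed
    define f where "f i = \<tau> i / \<rho> i" for i
    define Fs where "Fs = f ` {0..<n}"
    have finFs: "finite Fs" "Fs \<noteq> {}" using assms(1) Fs_def by auto
    define L where "L = Max Fs"
    define \<mu> where "\<mu> = Min Fs"
    have fL: "f i \<le> L" "\<mu> \<le> f i" if "i < n" for i using that finFs L_def \<mu>_def Fs_def by auto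
    have fpos: "f i > 0" if "i < n" for i using \<tau>pos \<rho>pos that f_def by simp
    have n0: "0 < n" using assms(1) by simp
    have Lpos: "L > 0" using fL(1)[OF n0] fpos[OF n0] by simp
    have "\<mu> \<in> Fs" using finFs \<mu>_def by simp
    then obtain i0 where "i0 < n" "\<mu> = f i0" unfolding Fs_def by auto
    hence \<mu>pos: "\<mu> > 0" using fpos by simp
    have labP: "\<forall>D\<in>P. label P D < n" using lab by simp
    have clL: "\<forall>D\<in>set ps. f (label P D) = L" if cor: "(C, ps) \<in> coronas P" "f (label P C) = L" for C ps
    proof -
      have C: "C \<in> P" "set ps \<subseteq> P" using cor unfolding coronas_def by auto
      define \<sigma> where "\<sigma> i = (1/L) * \<tau> i" for i
      have "angle_sum \<sigma> (label P C, map (label P) ps) = angle_sum \<tau> (label P C, map (label P) ps)"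
        unfolding \<sigma>_def using Lpos labP C \<tau>pos by (intro angle_sum_scale) auto
      hence eq: "angle_sum \<sigma> (label P C, map (label P) ps) = angle_sum \<rho> (label P C, map (label P) ps)"
        using tight[OF cor(1)] geo[OF cor(1)] by simp
      have lC: "label P C < n" using labP C by simp
      have s1: "\<sigma> (label P C) = \<rho> (label P C)" using cor(2) Lpos \<rho>pos[OF lC] unfolding \<sigma>_def f_def by (auto simp: field_simps)
      have s2: "\<forall>x\<in>set (map (label P) ps). 0 < \<sigma> x \<and> \<sigma> x \<le> \<rho> x"
      proof
        fix x assume "x \<in> set (map (label P) ps)"
        hence x: "x < n" using labP C by auto
        have "\<tau> x / \<rho> x \<le> L" using fL(1)[OF x] f_def by simp
        hence "\<tau> x \<le> L * \<rho> x" using \<rho>pos[OF x] by (simp add: divide_simps)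
        thus "0 < \<sigma> x \<and> \<sigma> x \<le> \<rho> x" using Lpos \<tau>pos[OF x] unfolding \<sigma>_def by (simp add: field_simps)
      qed
      have "\<forall>x\<in>set (map (label P) ps). \<sigma> x = \<rho> x"
        using force[OF s1 _ s2 eq] Lpos \<tau>pos[OF lC] \<sigma>_def by simp
      show ?thesis
      proof
        fix D assume D: "D \<in> set ps"
        hence lD: "label P D < n" using labP C by auto
        have "\<sigma> (label P D) = \<rho> (label P D)" using \<open>\<forall>x\<in>set (map (label P) ps). \<sigma> x = \<rho> x\<close> D by simp
        thus "f (label P D) = L" using Lpos \<rho>pos[OF lD] unfolding \<sigma>_def f_def by (auto simp: field_simps)
      qed
    qed
    have cl\<mu>: "\<forall>D\<in>set ps. f (label P D) = \<mu>" if cor: "(C, ps) \<in> coronas P" "f (label P C) = \<mu>" for C ps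
    proof -
      have C: "C \<in> P" "set ps \<subseteq> P" using cor unfolding coronas_def by auto
      define \<sigma> where "\<sigma> i = (1/\<mu>) * \<tau> i" for i
      have "angle_sum \<sigma> (label P C, map (label P) ps) = angle_sum \<tau> (label P C, map (label P) ps)"
        unfolding \<sigma>_def using \<mu>pos labP C \<tau>pos by (intro angle_sum_scale) auto
      hence eq: "angle_sum \<rho> (label P C, map (label P) ps) = angle_sum \<sigma> (label P C, map (label P) ps)"
        using tight[OF cor(1)] geo[OF cor(1)] by simp
      have lC: "label P C < n" using labP C by simp
      have s1: "\<rho> (label P C) = \<sigma> (label P C)" using cor(2) \<mu>pos \<rho>pos[OF lC] unfolding \<sigma>_def f_def by (auto simp: field_simps)
      have s2: "\<forall>x\<in>set (map (label P) ps). 0 < \<rho> x \<and> \<rho> x \<le> \<sigma> x"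
      proof
        fix x assume "x \<in> set (map (label P) ps)"
        hence x: "x < n" using labP C by auto
        have "\<mu> \<le> \<tau> x / \<rho> x" using fL(2)[OF x] f_def by simp
        hence "\<mu> * \<rho> x \<le> \<tau> x" using \<rho>pos[OF x] by (simp add: divide_simps)
        thus "0 < \<rho> x \<and> \<rho> x \<le> \<sigma> x" using \<mu>pos \<rho>pos[OF x] unfolding \<sigma>_def by (simp add: field_simps)
      qed
      have "\<forall>x\<in>set (map (label P) ps). \<rho> x = \<sigma> x"
        using force[OF s1 _ s2 eq] \<rho>pos[OF lC] by simp
      show ?thesis
      proof
        fix D assume D: "D \<in> set ps"
        hence lD: "label P D < n" using labP C by auto
        have "\<rho> (label P D) = \<sigma> (label P D)" using \<open>\<forall>x\<in>set (map (label P) ps). \<rho> x = \<sigma> x\<close> D by simp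
        thus "f (label P D) = \<mu>" using \<mu>pos \<rho>pos[OF lD] unfolding \<sigma>_def f_def by (auto simp: field_simps)
      qed
    qed
    have L\<mu>: "L = \<mu>"
    proof (rule ccontr)
      assume ne: "L \<noteq> \<mu>"
      define Q where "Q = {D\<in>P. f (label P D) = L}"
      define Q' where "Q' = {D\<in>P. f (label P D) = \<mu>}"
      have clo: "\<forall>C\<in>Q. \<exists>ps. set ps \<subseteq> Q \<and> corona C ps"
      proof
        fix C assume CQ: "C \<in> Q"
        obtain ps where ps: "(C, ps) \<in> coronas P" using max_corona[OF assms(2) _ r0 r0le R1ge] CQ Q_def by blast
        have "set ps \<subseteq> P" "corona C ps" using ps unfolding coronas_def by auto
        moreover have "\<forall>D\<in>set ps. f (label P D) = L" using clL[OF ps] CQ Q_def by simp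
        ultimately show "\<exists>ps. set ps \<subseteq> Q \<and> corona C ps" unfolding Q_def by blast
      qed
      have clo': "\<forall>C\<in>Q'. \<exists>ps. set ps \<subseteq> Q' \<and> corona C ps"
      proof
        fix C assume CQ: "C \<in> Q'"
        obtain ps where ps: "(C, ps) \<in> coronas P" using max_corona[OF assms(2) _ r0 r0le R1ge] CQ Q'_def by blast
        have "set ps \<subseteq> P" "corona C ps" using ps unfolding coronas_def by auto
        moreover have "\<forall>D\<in>set ps. f (label P D) = \<mu>" using cl\<mu>[OF ps] CQ Q'_def by simp
        ultimately show "\<exists>ps. set ps \<subseteq> Q' \<and> corona C ps" unfolding Q'_def by blast
      qed
      have "L \<in> Fs" "\<mu> \<in> Fs" using finFs L_def \<mu>_def by auto
      then obtain i j where ij: "i < n" "f i = L" "j < n" "f j = \<mu>" unfolding Fs_def by auto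
      have "Q \<noteq> {}" using surj[OF ij(1)] ij Q_def by auto
      moreover have "Q' \<noteq> {}" using surj[OF ij(3)] ij Q'_def by auto
      moreover have "Q \<inter> Q' = {}" using ne Q_def Q'_def by auto
      ultimately show False
        using no_two[OF dis r0 r0le R1ge _ _ _ _ _ clo clo'] Q_def Q'_def by blast
    qed
    have "f (n-1) = 1" using \<tau>(2) \<rho>last f_def by simp
    hence "L = 1" using fL[of "n-1"] L\<mu> assms(1) by simp
    hence eqi: "\<tau> i = \<rho> i" if "i < n" for i using fL[OF that] L\<mu> \<rho>pos[OF that] f_def by simp
    show ?thesis
      using \<tau>(1) \<rho>in eqi \<rho>_def by (intro PiE_ext[of \<tau> "{0..<n}" "\<lambda>_. {0<..}"]) auto
  qed
  show ?thesis using \<rho>in uniq by blast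
qed


end
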